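(* For $k\in\mathbb N$ and $i\in\{1,2\}$ let $\mathcal E_k^i$ and $\tilde{\mathcal E}_k^i$ be the Hamiltonian vector fields of $h_k=\frac1k\Re\operatorname{tr}(J^k)$ and $\tilde h_k=\frac1k\Im\operatorname{tr}(J^k)$ with respect to $\{\ ,\ \}_i^{\mathrm{red}}$. Then $$\mathcal E_k^2[q_j]=\mathcal E_{k+1}^1[q_j]=\Re(J^k)_{jj},\qquad \mathcal E_k^2[J]=\mathcal E_{k+1}^1[J]=\tfrac12\big[R(q)(J^k+(J^k)^* )+((J^k)^*-J^k),J\big],$$ $$\tilde{\mathcal E}_k^2[q_j]=\tilde{\mathcal E}_{k+1}^1[q_j]=\Re(-\mathrm iJ^k)_{jj},\qquad \tilde{\mathcal E}_k^2[J]=\tilde{\mathcal E}_{k+1}^1[J]=\tfrac12\big[\mathrm iR(q)((J^k)^*-J^k)+\mathrm i(J^k+(J^k)^* ),J\big].$$ All these vector fields are tangent to the submanifold $\mathfrak M_{0,-}^{\mathrm{reg}}=\{(e^q,J)\in\mathfrak M_0^{\mathrm{reg}}:J^+=0\}$ and to $\mathfrak M_{0,+}^{\mathrm{reg}}=\{(e^q,J)\in\mathfrak M_0^{\mathrm{reg}}:J^-=0\}$. The restrictions $\mathcal V_k^i$ of $\mathcal E_k^i$ to $\mathfrak M_{0,-}^{\mathrm{reg}}$ satisfy $$\mathcal V_k^2[q_j]=\mathcal V_{k+1}^1[q_j]=((J^-)^k)_{jj},\qquad \mathcal V_k^2[J^-]=\mathcal V_{k+1}^1[J^-]=[R(q)(J^-)^k,J^-],$$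 while the restrictions of all $\tilde{\mathcal E}_k^i$ to $\mathfrak M_{0,-}^{\mathrm{reg}}$ vanish. Denoting by $\mathcal U_k^i,\tilde{\mathcal U}_k^i$ the restrictions of $\mathcal E_k^i,\tilde{\mathcal E}_k^i$ to $\mathfrak M_{0,+}^{\mathrm{reg}}$, for all $l\in\mathbb N$: $\mathcal U^2_{2l-1}=\mathcal U^1_{2l}=0$, $\tilde{\mathcal U}^2_{2l}=\tilde{\mathcal U}^1_{2l+1}=0$, and $$\mathcal U^2_{2l}[q_j]=\mathcal U^1_{2l+1}[q_j]=\Re((J^+)^{2l})_{jj},\quad \mathcal U^2_{2l}[J^+]=\mathcal U^1_{2l+1}[J^+]=[R(q)(J^+)^{2l},J^+],$$ $$\tilde{\mathcal U}^2_{2l-1}[q_j]=\tilde{\mathcal U}^1_{2l}[q_j]=\Re(-\mathrm i(J^+)^{2l-1})_{jj},\quad \tilde{\mathcal U}^2_{2l-1}[J^+]=\tilde{\mathcal U}^1_{2l}[J^+]=[-\mathrm iR(q)(J^+)^{2l-1},J^+].$$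
   Context: $\mathcal G=\mathfrak{gl}(n,\mathbb C)$ (real Lie algebra) with $\langle X,Y\rangle=\Re\operatorname{tr}(XY)$. $\mathcal G^+=\mathfrak u(n)$ (anti-Hermitian), $\mathcal G^-=\mathrm i\,\mathfrak u(n)$ (Hermitian); $X=X^++X^-$ with $X^\pm=\frac12(X\mp X^* )$; $\mathcal G^\pm_0$ are the diagonal matrices in $\mathcal G^\pm$ and $X^-_0$ denotes the diagonal part of $X^-$. $\mathfrak M_0^{\mathrm{reg}}=\{(e^q,J): J\in\mathcal G,\ q=\mathrm{diag}(q_1,\dots,q_n),\ q_i\in\mathbb R,\ q_1>\dots>q_n\}$. For $f\in C^\infty(\mathfrak M_0^{\mathrm{reg}})$: $\nabla_1f\in\mathcal G^-_0$ with $\langle\nabla_1f,X_0\rangle=\frac{d}{dt}|_0f(e^{q+tX_0},J)$ ($X_0\in\mathcal G_0^-$), $d_2f\in\mathcal G$ with $\langle d_2f,X\rangle=\frac{d}{dt}|_0f(e^q,J+tX)$, $\nabla_2f=J\,d_2f$, $\nabla_2'f=(d_2f)J$. $R(q)\in\mathrm{End}(\mathcal G)$: $(R(q)X)_{ii}=0$, $(R(q)X)_{ij}=X_{ij}\coth(q_i-q_j)$ for $i\ne j$. The following formulas define anti-symmetric bi-derivations on $C^\infty(\mathfrak M_0^{\mathrm{reg}})$ (derivatives at $(e^q,J)$): $\{f,h\}_1^{\mathrm{red}}=\langle\nabla_1f,(d_2h)^-_0\rangle-\langle\nabla_1h,(d_2f)^-_0\rangle+\langle R(q)[d_2f,J]^+,(d_2h)^-\rangle-\langle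 R(q)[d_2h,J]^+,(d_2f)^-\rangle+\langle J^+,[(d_2f)^-,(d_2h)^-]-[(d_2f)^+,(d_2h)^+]\rangle$; $2\{f,h\}_2^{\mathrm{red}}=\langle\nabla_1f,(\nabla_2h+\nabla_2'h)^-_0\rangle-\langle\nabla_1h,(\nabla_2f+\nabla_2'f)^-_0\rangle+\langle R(q)[d_2f,J]^+,(\nabla_2h+\nabla_2'h)^-\rangle-\langle R(q)[d_2h,J]^+,(\nabla_2f+\nabla_2'f)^-\rangle+\langle(\nabla_2f)^-,(\nabla_2'h)^-\rangle+\langle(\nabla_2'f)^+,(\nabla_2h)^+\rangle-\langle(\nabla_2'f)^-,(\nabla_2h)^-\rangle-\langle(\nabla_2f)^+,(\nabla_2'h)^+\rangle$. A vector field $\mathcal E$ on $\mathfrak M_0^{\mathrm{reg}}$ is encoded by the functions $\mathcal E[q]$ ($\mathcal G_0^-$-valued, with diagonal entries $\mathcal E[q_j]$) and $\mathcal E[J]$ ($\mathcal G$-valued), so that $\mathcal E[f]=\langle\nabla_1f,\mathcal E[q]\rangle+\langle d_2f,\mathcal E[J]\rangle$; we write $\mathcal E[J^\pm]=(\mathcal E[J])^\pm$. For a $\mathbb T^n$-invariant $h$ (invariant under $(e^q,J)\mapsto(e^q,\tau J\tau^{-1})$, $\tau$ diagonal unitary), its Hamiltonian vector field w.r.t. $\{\ ,\ \}_i^{\mathrm{red}}$ is the vector field $\mathcal E^i_h$ with $\mathcal E_h^i[f]=\{f,h\}_i^{\mathrm{red}}$ for all $f\in C^\infty(\mathfrak M_0^{\mathrm{reg}})$.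 *)

theory Defs
  imports "HOL-Analysis.Analysis"
begin

text \<open>Setting: the real Lie algebra gl(n,C), realised as complex matrices indexed by a
finite linearly ordered type 'n (so n = CARD('n)).  A point (e^q, J) of M_0^reg is
represented by the pair (q, J) with q the vector of diagonal entries of the real diagonal
matrix q and J a complex matrix.\<close>

type_synonym 'n cmat = "complex^'n^'n"
type_synonym 'n point = "(real^'n) \<times> 'n cmat"

definition matpow :: "'n::finite cmat \<Rightarrow> nat \<Rightarrow> 'n cmat" where
  "matpow X k = ((\<lambda>Y. X ** Y) ^^ k) (mat 1)"

definition cadj :: "'n::finite cmat \<Rightarrow> 'n cmat" where
  "cadj X = (\<chi> i j. cnj (X $ j $ i))"

definition csmul :: "complex \<Rightarrow> 'n::finite cmat \<Rightarrow> 'n cmat" where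
  "csmul c X = (\<chi> i j. c * X $ i $ j)"

definition mtrace :: "'n::finite cmat \<Rightarrow> complex" where
  "mtrace X = (\<Sum>i\<in>UNIV. X $ i $ i)"

definition ip :: "'n::finite cmat \<Rightarrow> 'n cmat \<Rightarrow> real" where
  "ip X Y = Re (mtrace (X ** Y))"

definition Hp :: "'n::finite cmat \<Rightarrow> 'n cmat" where
  "Hp X = (1/2::real) *\<^sub>R (X - cadj X)"

definition Hm :: "'n::finite cmat \<Rightarrow> 'n cmat" where
  "Hm X = (1/2::real) *\<^sub>R (X + cadj X)"

definition diagpart :: "'n::finite cmat \<Rightarrow> 'n cmat" where
  "diagpart X = (\<chi> i j. if i = j then X $ i $ j else 0)"

definition Hm0 :: "'n::finite cmat \<Rightarrow> 'n cmat" where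
  "Hm0 X = diagpart (Hm X)"

definition comm :: "'n::finite cmat \<Rightarrow> 'n cmat \<Rightarrow> 'n cmat" where
  "comm X Y = X ** Y - Y ** X"

definition G0m :: "'n::finite cmat set" where
  "G0m = {X. (\<forall>i j. i \<noteq> j \<longrightarrow> X $ i $ j = 0) \<and> (\<forall>i. Im (X $ i $ i) = 0)}"

definition diagmat :: "real^'n::finite \<Rightarrow> 'n cmat" where
  "diagmat v = (\<chi> i j. if i = j then complex_of_real (v $ i) else 0)"

definition diagvec :: "'n::finite cmat \<Rightarrow> real^'n" where
  "diagvec X = (\<chi> i. Re (X $ i $ i))"

definition coth :: "real \<Rightarrow> real" where
  "coth x = cosh x / sinh x"

definition Rq :: "real^'n::finite \<Rightarrow> 'n cmat \<Rightarrow> 'n cmat" where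
  "Rq q X = (\<chi> i j. if i = j then 0 else X $ i $ j * complex_of_real (coth (q $ i - q $ j)))"

definition M0reg :: "('n::{finite,linorder}) point set" where
  "M0reg = {(q, J). \<forall>i j. i < j \<longrightarrow> q $ j < q $ i}"

fun Ck_on :: "nat \<Rightarrow> 'a::euclidean_space set \<Rightarrow> ('a \<Rightarrow> real) \<Rightarrow> bool" where
  "Ck_on 0 S f = continuous_on S f"
| "Ck_on (Suc k) S f = ((\<forall>x\<in>S. f differentiable (at x)) \<and>
      (\<forall>b\<in>Basis. Ck_on k S (\<lambda>x. frechet_derivative f (at x) b)))"

definition smooth_on :: "'a::euclidean_space set \<Rightarrow> ('a \<Rightarrow> real) \<Rightarrow> bool" where
  "smooth_on S f = (\<forall>k. Ck_on k S f)"

definition nabla1 :: "('n::finite point \<Rightarrow> real) \<Rightarrow> 'n point \<Rightarrow> 'n cmat" where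
  "nabla1 f p = (THE Y. Y \<in> G0m \<and>
     (\<forall>X\<in>G0m. ip Y X = deriv (\<lambda>t. f (fst p + t *\<^sub>R diagvec X, snd p)) 0))"

definition d2 :: "('n::finite point \<Rightarrow> real) \<Rightarrow> 'n point \<Rightarrow> 'n cmat" where
  "d2 f p = (THE Y. \<forall>X. ip Y X = deriv (\<lambda>t. f (fst p, snd p + t *\<^sub>R X)) 0)"

definition nabla2 :: "('n::finite point \<Rightarrow> real) \<Rightarrow> 'n point \<Rightarrow> 'n cmat" where
  "nabla2 f p = snd p ** d2 f p"

definition nabla2' :: "('n::finite point \<Rightarrow> real) \<Rightarrow> 'n point \<Rightarrow> 'n cmat" where
  "nabla2' f p = d2 f p ** snd p"

definition red_bracket1 :: "('n::finite point \<Rightarrow> real) \<Rightarrow> ('n point \<Rightarrow> real) \<Rightarrow> 'n point \<Rightarrow> real" where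
  "red_bracket1 f h p = (let q = fst p; J = snd p in
      ip (nabla1 f p) (Hm0 (d2 h p)) - ip (nabla1 h p) (Hm0 (d2 f p))
    + ip (Rq q (Hp (comm (d2 f p) J))) (Hm (d2 h p))
    - ip (Rq q (Hp (comm (d2 h p) J))) (Hm (d2 f p))
    + ip (Hp J) (comm (Hm (d2 f p)) (Hm (d2 h p)) - comm (Hp (d2 f p)) (Hp (d2 h p))))"

definition red_bracket2 :: "('n::finite point \<Rightarrow> real) \<Rightarrow> ('n point \<Rightarrow> real) \<Rightarrow> 'n point \<Rightarrow> real" where
  "red_bracket2 f h p = (1/2) * (let q = fst p; J = snd p in
      ip (nabla1 f p) (Hm0 (nabla2 h p + nabla2' h p))
    - ip (nabla1 h p) (Hm0 (nabla2 f p + nabla2' f p))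
    + ip (Rq q (Hp (comm (d2 f p) J))) (Hm (nabla2 h p + nabla2' h p))
    - ip (Rq q (Hp (comm (d2 h p) J))) (Hm (nabla2 f p + nabla2' f p))
    + ip (Hm (nabla2 f p)) (Hm (nabla2' h p)) + ip (Hp (nabla2' f p)) (Hp (nabla2 h p))
    - ip (Hm (nabla2' f p)) (Hm (nabla2 h p)) - ip (Hp (nabla2 f p)) (Hp (nabla2' h p)))"

definition red_bracket :: "nat \<Rightarrow> ('n::finite point \<Rightarrow> real) \<Rightarrow> ('n point \<Rightarrow> real) \<Rightarrow> 'n point \<Rightarrow> real" where
  "red_bracket i f h p = (if i = 1 then red_bracket1 f h p else red_bracket2 f h p)"

text \<open>A vector field E is encoded by Eq (the diagonal entries E[q_j]) and EJ (= E[J]);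
  E[f] = \<langle>\<nabla>_1 f, E[q]\<rangle> + \<langle>d_2 f, E[J]\<rangle>.\<close>
definition vf_apply :: "('n::finite point \<Rightarrow> real^'n) \<Rightarrow> ('n point \<Rightarrow> 'n cmat)
    \<Rightarrow> ('n point \<Rightarrow> real) \<Rightarrow> 'n point \<Rightarrow> real" where
  "vf_apply Eq EJ f p = ip (nabla1 f p) (diagmat (Eq p)) + ip (d2 f p) (EJ p)"

definition is_ham_vf :: "nat \<Rightarrow> ('n::{finite,linorder} point \<Rightarrow> real)
    \<Rightarrow> ('n::{finite,linorder} point \<Rightarrow> real^('n::{finite,linorder}))
    \<Rightarrow> ('n::{finite,linorder} point \<Rightarrow> 'n::{finite,linorder} cmat) \<Rightarrow> bool" where
  "is_ham_vf i h Eq EJ = (\<forall>f. smooth_on M0reg f \<longrightarrow>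
      (\<forall>p\<in>M0reg. vf_apply Eq EJ f p = red_bracket i f h p))"

definition hk :: "nat \<Rightarrow> 'n::finite point \<Rightarrow> real" where
  "hk k p = (1 / real k) * Re (mtrace (matpow (snd p) k))"

definition htk :: "nat \<Rightarrow> 'n::finite point \<Rightarrow> real" where
  "htk k p = (1 / real k) * Im (mtrace (matpow (snd p) k))"

end

theory Submission
  imports Defs
begin


lemma matpow_0[simp]: "matpow X 0 = mat 1" by (simp add: matpow_def)
lemma matpow_Suc: "matpow X (Suc k) = X ** matpow X k" by (simp add: matpow_def)

lemma matpow_add: "matpow X (a + b) = matpow X a ** matpow X b"
  by (induction a) (simp_all add: matpow_Suc matrix_mul_assoc)

lemma matpow_Suc': "matpow X (Suc k) = matpow X k ** X"
  using matpow_add[of X k 1] by (simp add: matpow_Suc)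

lemma matpow_comm: "matpow X k ** X = X ** matpow X k"
  by (metis matpow_Suc matpow_Suc')

lemma mtrace_eq: "mtrace X = trace X" by (simp add: mtrace_def trace_def)

lemma trace_comm: "trace (A ** B) = trace (B ** (A::'n::finite cmat))"
  by (rule trace_mul_sym)

lemma matrix_add_rdistrib': "((B + C) ** A) = (B ** A) + (C ** (A::'n::finite cmat))"
  by (vector matrix_matrix_mult_def sum.distrib[symmetric] field_simps)
lemma matrix_diff_ldistrib': "(A ** (B - C)) = (A ** B) - (A ** (C::'n::finite cmat))"
  by (vector matrix_matrix_mult_def sum_subtractf[symmetric] field_simps)
lemma matrix_diff_rdistrib': "((B - C) ** A) = (B ** A) - (C ** (A::'n::finite cmat))"
  by (vector matrix_matrix_mult_def sum_subtractf[symmetric] field_simps)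
lemma matrix_neg_l: "((- B) ** A) = - (B ** (A::'n::finite cmat))"
  by (vector matrix_matrix_mult_def sum_negf[symmetric] field_simps)
lemma matrix_neg_r: "(A ** (- B)) = - (A ** (B::'n::finite cmat))"
  by (vector matrix_matrix_mult_def sum_negf[symmetric] field_simps)

lemma trace_scaleR0: "trace (r *\<^sub>R (A::'n::finite cmat)) = r *\<^sub>R trace A"
  by (simp add: trace_def scaleR_sum_right)
lemma trace_scaleR: "trace (r *\<^sub>R (A::'n::finite cmat)) = of_real r * trace A"
  unfolding trace_scaleR0 by (simp add: scaleR_conv_of_real)
lemma trace_neg: "trace (- (A::'n::finite cmat)) = - trace A"
  by (simp add: trace_def sum_negf)

lemma ip_sym: "ip X Y = ip Y X" by (simp add: ip_def mtrace_eq trace_comm)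
lemma ip_add_l: "ip (X + Y) Z = ip X Z + ip Y Z"
  by (simp add: ip_def mtrace_eq matrix_add_rdistrib' trace_add)
lemma ip_add_r: "ip Z (X + Y) = ip Z X + ip Z Y"
  by (simp add: ip_def mtrace_eq matrix_add_ldistrib trace_add)
lemma ip_diff_l: "ip (X - Y) Z = ip X Z - ip Y Z"
  by (simp add: ip_def mtrace_eq matrix_diff_rdistrib' trace_sub)
lemma ip_diff_r: "ip Z (X - Y) = ip Z X - ip Z Y"
  by (simp add: ip_def mtrace_eq matrix_diff_ldistrib' trace_sub)
lemma ip_neg_l: "ip (- X) Z = - ip X Z"
  by (simp add: ip_def mtrace_eq matrix_neg_l trace_neg)
lemma ip_neg_r: "ip Z (- X) = - ip Z X"
  by (simp add: ip_def mtrace_eq matrix_neg_r trace_neg)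
lemma ip_scaleR_l: "ip (r *\<^sub>R X) Z = r * ip X Z"
  by (simp add: ip_def mtrace_eq scalar_matrix_assoc[symmetric] trace_scaleR)
lemma ip_scaleR_r: "ip Z (r *\<^sub>R X) = r * ip Z X"
  by (simp add: ip_def mtrace_eq matrix_scalar_ac trace_scaleR scalar_matrix_assoc[symmetric])
lemma ip_zero_l[simp]: "ip 0 Z = 0" by (simp add: ip_def mtrace_eq trace_def)
lemma ip_zero_r[simp]: "ip Z 0 = 0" by (simp add: ip_def mtrace_eq trace_def)

lemmas ip_lin = ip_add_l ip_add_r ip_diff_l ip_diff_r ip_neg_l ip_neg_r ip_scaleR_l ip_scaleR_r

lemma cadj_cadj[simp]: "cadj (cadj X) = X" by (simp add: cadj_def vec_eq_iff)
lemma cadj_add: "cadj (X + Y) = cadj X + cadj Y" by (simp add: cadj_def vec_eq_iff)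
lemma cadj_diff: "cadj (X - Y) = cadj X - cadj Y" by (simp add: cadj_def vec_eq_iff)
lemma cadj_neg: "cadj (- X) = - cadj X" by (simp add: cadj_def vec_eq_iff)
lemma cadj_scaleR: "cadj (r *\<^sub>R X) = r *\<^sub>R cadj X" by (simp add: cadj_def vec_eq_iff)
lemma cadj_zero[simp]: "cadj 0 = 0" by (simp add: cadj_def vec_eq_iff)
lemma cadj_mult: "cadj (A ** B) = cadj B ** cadj (A::'n::finite cmat)"
  by (simp add: cadj_def vec_eq_iff matrix_matrix_mult_def mult.commute)
lemma cadj_mat1[simp]: "cadj (mat 1 :: 'n::finite cmat) = mat 1"
  by (simp add: cadj_def vec_eq_iff mat_def)
lemma trace_cadj: "trace (cadj X) = cnj (trace (X::'n::finite cmat))"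
  by (simp add: cadj_def trace_def)
lemma ip_cadj: "ip (cadj X) (cadj Y) = ip X Y"
proof -
  have "ip (cadj X) (cadj Y) = Re (cnj (trace (Y ** X)))"
    by (simp add: ip_def mtrace_eq cadj_mult[symmetric] trace_cadj)
  also have "\<dots> = ip X Y" by (simp add: ip_def mtrace_eq trace_comm)
  finally show ?thesis .
qed
lemma ip_cadj_r: "ip X (cadj Y) = ip (cadj X) Y"
  by (metis cadj_cadj ip_cadj)

lemma ip_Hp: "ip X (Hp Y) = ip (Hp X) Y"
  by (simp add: Hp_def ip_lin ip_cadj_r)
lemma ip_Hm: "ip X (Hm Y) = ip (Hm X) Y"
  by (simp add: Hm_def ip_lin ip_cadj_r)

lemma Hp_Hm: "Hp X + Hm X = X"
  unfolding Hp_def Hm_def by (simp add: vec_eq_iff) (simp add: algebra_simps)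
lemma Hm_Hp: "Hm X + Hp X = X" using Hp_Hm by (metis add.commute)

lemma cadj_Hm: "cadj (Hm X) = Hm X" unfolding Hm_def by (simp add: cadj_add cadj_scaleR add.commute)
lemma cadj_Hp: "cadj (Hp X) = - Hp X" unfolding Hp_def by (simp add: cadj_diff cadj_scaleR cadj_neg vec_eq_iff algebra_simps)

lemma Hp_herm: "cadj X = X \<Longrightarrow> Hp X = 0" by (simp add: Hp_def)
lemma Hm_herm: "cadj X = X \<Longrightarrow> Hm X = X"
  by (simp add: Hm_def vec_eq_iff)
lemma Hp_anti: "cadj X = - X \<Longrightarrow> Hp X = X"
  by (simp add: Hp_def vec_eq_iff)
lemma Hm_anti: "cadj X = - X \<Longrightarrow> Hm X = 0" by (simp add: Hm_def)
lemma Hp_zero_iff: "Hp X = 0 \<longleftrightarrow> cadj X = X"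
  by (auto simp: Hp_def vec_eq_iff)
lemma Hm_zero_iff: "Hm X = 0 \<longleftrightarrow> cadj X = - X"
proof -
  have "Hm X = 0 \<longleftrightarrow> X + cadj X = 0" by (simp add: Hm_def)
  also have "\<dots> \<longleftrightarrow> cadj X = - X" by (metis add.commute eq_neg_iff_add_eq_0)
  finally show ?thesis .
qed

lemma Hm_Hm: "Hm (Hm X) = Hm X" by (simp add: Hm_herm cadj_Hm)
lemma Hp_Hp: "Hp (Hp X) = Hp X" by (simp add: Hp_anti cadj_Hp)



lemma comm_add_l: "comm (A + B) C = comm A C + comm B (C::'n::finite cmat)"
  by (simp add: comm_def matrix_add_ldistrib matrix_add_rdistrib')
lemma comm_diff_l: "comm (A - B) C = comm A C - comm B (C::'n::finite cmat)"
  by (simp add: comm_def matrix_diff_ldistrib' matrix_diff_rdistrib')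
lemma comm_neg_l: "comm (- A) C = - comm A (C::'n::finite cmat)"
  by (simp add: comm_def matrix_neg_l matrix_neg_r)
lemma comm_scaleR_l: "comm (r *\<^sub>R A) C = r *\<^sub>R comm A (C::'n::finite cmat)"
  by (simp add: comm_def scalar_matrix_assoc[symmetric] matrix_scalar_ac scaleR_diff_right)
lemma comm_zero_l[simp]: "comm 0 (C::'n::finite cmat) = 0" by (simp add: comm_def)
lemma comm_swap: "comm A B = - comm B (A::'n::finite cmat)" by (simp add: comm_def)
lemma cadj_comm: "cadj (comm A B) = comm (cadj B) (cadj (A::'n::finite cmat))"
  by (simp add: comm_def cadj_diff cadj_mult)

lemma ip_comm: "ip (comm A B) C = ip A (comm B (C::'n::finite cmat))"
proof -
  have "trace ((B ** A) ** C) = trace (A ** (C ** B))"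
    by (metis matrix_mul_assoc trace_comm)
  then show ?thesis
    by (simp add: ip_def mtrace_eq comm_def matrix_diff_rdistrib' matrix_diff_ldistrib' trace_sub matrix_mul_assoc)
qed

lemma ip_comm2: "ip (comm J Y) Z = ip Y (comm Z (J::'n::finite cmat))"
  by (metis ip_comm ip_sym)

lemma coth_neg: "coth (- x) = - coth x" by (simp add: coth_def)

lemma coth_swap: "coth (a - b) = - coth (b - a)"
  using coth_neg[of "b - a"] by simp

lemma Rq_nth: "Rq q X $ i $ j = (if i = j then 0 else X $ i $ j * complex_of_real (coth (q $ i - q $ j)))"
  by (simp add: Rq_def)

lemma trace_mult_sum: "trace (A ** B) = (\<Sum>i\<in>UNIV. \<Sum>k\<in>UNIV. A $ i $ k * B $ k $ (i::'n::finite))"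
  by (simp add: trace_def matrix_matrix_mult_def)

lemma Rq_ip: "ip (Rq q X) Y = - ip X (Rq q Y)"
proof -
  have pw: "Rq q X $ i $ k * Y $ k $ i = - (X $ i $ k * Rq q Y $ k $ i)" for i k
  proof (cases "i = k")
    case True then show ?thesis by (simp add: Rq_nth)
  next
    case False
    then show ?thesis by (simp add: Rq_nth coth_swap[of "q $ k" "q $ i"])
  qed
  have "trace (Rq q X ** Y) = - trace (X ** Rq q Y)"
    unfolding trace_mult_sum by (simp add: pw sum_negf)
  then show ?thesis by (simp add: ip_def mtrace_eq)
qed

lemma cadj_Rq: "cadj (Rq q X) = - Rq q (cadj X)"
proof -
  have "cadj (Rq q X) $ i $ j = - Rq q (cadj X) $ i $ j" for i j
  proof (cases "i = j")
    case True then show ?thesis by (simp add: Rq_nth cadj_def)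
  next
    case False
    then show ?thesis by (simp add: Rq_nth cadj_def coth_swap[of "q $ j" "q $ i"])
  qed
  then show ?thesis by (simp add: vec_eq_iff)
qed

lemma Rq_add: "Rq q (A + B) = Rq q A + Rq q B" by (simp add: Rq_def vec_eq_iff algebra_simps)
lemma Rq_diff: "Rq q (A - B) = Rq q A - Rq q B" by (simp add: Rq_def vec_eq_iff algebra_simps)
lemma Rq_neg: "Rq q (- A) = - Rq q A" by (simp add: Rq_def vec_eq_iff)
lemma Rq_scaleR: "Rq q (r *\<^sub>R A) = r *\<^sub>R Rq q A" by (simp add: Rq_def vec_eq_iff)
lemma Rq_zero[simp]: "Rq q 0 = 0" by (simp add: Rq_def vec_eq_iff)
lemma Rq_csmul: "Rq q (csmul c A) = csmul c (Rq q A)" by (simp add: Rq_def csmul_def vec_eq_iff)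

lemma Hp_zero[simp]: "Hp 0 = 0" by (simp add: Hp_def)
lemma Hm_zero[simp]: "Hm 0 = 0" by (simp add: Hm_def)

lemma Hp_RHm: "Hp (Rq q (Hm X)) = Rq q (Hm X)"
  by (rule Hp_anti) (simp add: cadj_Rq cadj_Hm)

lemma termR: "ip (Rq q (Hp (comm Y J))) (Hm Phi) = ip Y (comm (Rq q (Hm Phi)) J)"
proof -
  have "ip (Rq q (Hp (comm Y J))) (Hm Phi) = - ip (Hp (comm Y J)) (Rq q (Hm Phi))"
    by (rule Rq_ip)
  also have "\<dots> = - ip (comm Y J) (Hp (Rq q (Hm Phi)))" by (simp add: ip_Hp)
  also have "\<dots> = - ip (comm Y J) (Rq q (Hm Phi))" by (simp add: Hp_RHm)
  also have "\<dots> = - ip Y (comm J (Rq q (Hm Phi)))" by (simp add: ip_comm)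
  also have "\<dots> = ip Y (comm (Rq q (Hm Phi)) J)" by (metis comm_swap ip_neg_r)
  finally show ?thesis .
qed

lemma Hp_comm_HmHm: "Hp (comm (Hm A) (Hm B)) = comm (Hm A) (Hm B)"
  by (rule Hp_anti) (simp add: cadj_comm cadj_Hm comm_swap[of "Hm B"])
lemma Hp_comm_HpHp: "Hp (comm (Hp A) (Hp B)) = comm (Hp A) (Hp B)"
  by (rule Hp_anti) (simp add: cadj_comm cadj_Hp comm_neg_l comm_swap[of "- Hp B"] comm_swap[of "Hp B"])

lemma term4:
  assumes "comm Phi J = 0"
  shows "ip (Hp J) (comm (Hm Y) (Hm Phi) - comm (Hp Y) (Hp Phi)) = - ip Y (comm (Hp Phi) J)"
proof -
  have c: "comm (Hm Phi) J = - comm (Hp Phi) J"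
    using assms comm_add_l[of "Hm Phi" "Hp Phi" J] Hm_Hp[of Phi]
    by (simp add: eq_neg_iff_add_eq_0)
  have "ip (Hp J) (comm (Hm Y) (Hm Phi)) = ip J (comm (Hm Y) (Hm Phi))"
    by (simp add: ip_Hp[symmetric] Hp_comm_HmHm ip_sym)
  also have "\<dots> = ip (Hm Y) (comm (Hm Phi) J)" by (metis ip_comm ip_sym)
  finally have 1: "ip (Hp J) (comm (Hm Y) (Hm Phi)) = - ip (Hm Y) (comm (Hp Phi) J)"
    by (simp add: c ip_neg_r)
  have "ip (Hp J) (comm (Hp Y) (Hp Phi)) = ip J (comm (Hp Y) (Hp Phi))"
    by (simp add: ip_Hp[symmetric] Hp_comm_HpHp ip_sym)
  also have "\<dots> = ip (Hp Y) (comm (Hp Phi) J)" by (metis ip_comm ip_sym)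
  finally have 2: "ip (Hp J) (comm (Hp Y) (Hp Phi)) = ip (Hp Y) (comm (Hp Phi) J)" .
  have "ip (Hm Y) (comm (Hp Phi) J) + ip (Hp Y) (comm (Hp Phi) J) = ip Y (comm (Hp Phi) J)"
    by (simp add: ip_add_l[symmetric] Hm_Hp)
  then show ?thesis using 1 2 by (simp add: ip_diff_r)
qed

lemma Hm0_diag: "Hm0 Phi = diagmat (\<chi> j. Re (Phi $ j $ j))"
  by (simp add: Hm0_def diagpart_def Hm_def cadj_def diagmat_def vec_eq_iff complex_eq_iff)



lemma ip_Hm_Hm: "ip (Hm X) (Hm Phi) = ip X (Hm Phi)" by (simp add: ip_Hm[symmetric] Hm_Hm)
lemma ip_Hp_Hp: "ip (Hp X) (Hp Phi) = ip X (Hp Phi)" by (simp add: ip_Hp[symmetric] Hp_Hp)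

lemma Hm_add: "Hm (X + Y) = Hm X + Hm Y"
  by (simp add: Hm_def cadj_add scaleR_right_distrib[symmetric] add_ac)
lemma diagpart_add: "diagpart (X + Y) = diagpart X + diagpart Y"
  by (simp add: diagpart_def vec_eq_iff)
lemma Hm_double: "Hm (2 * X) = 2 *\<^sub>R Hm X"
  by (simp only: mult_2 Hm_add scaleR_2)
lemma Hm0_double: "Hm0 (2 * X) = 2 *\<^sub>R Hm0 X"
  by (simp only: Hm0_def mult_2 Hm_add diagpart_add scaleR_2)

lemma core1:
  assumes "nabla1 h p = 0" "d2 h p = Phi" "comm Phi (snd p) = 0"
  shows "red_bracket1 f h p = ip (nabla1 f p) (diagmat (\<chi> j. Re (Phi $ j $ j)))
          + ip (d2 f p) (comm (Rq (fst p) (Hm Phi) - Hp Phi) (snd p))"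
proof -
  obtain q J where p: "p = (q, J)" by (cases p)
  have "red_bracket1 f h p = ip (nabla1 f p) (Hm0 Phi)
      + ip (Rq q (Hp (comm (d2 f p) J))) (Hm Phi)
      + ip (Hp J) (comm (Hm (d2 f p)) (Hm Phi) - comm (Hp (d2 f p)) (Hp Phi))"
    using assms by (simp add: red_bracket1_def p)
  also have "\<dots> = ip (nabla1 f p) (Hm0 Phi) + ip (d2 f p) (comm (Rq q (Hm Phi)) J)
      - ip (d2 f p) (comm (Hp Phi) J)"
    using assms(3) by (simp add: termR term4 p)
  finally show ?thesis by (simp add: p Hm0_diag comm_diff_l ip_diff_r)
qed

lemma core2:
  assumes "nabla1 h p = 0" "d2 h p = Psi" "comm Psi (snd p) = 0"
  shows "red_bracket2 f h p = ip (nabla1 f p) (diagmat (\<chi> j. Re ((snd p ** Psi) $ j $ j)))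
          + ip (d2 f p) (comm (Rq (fst p) (Hm (snd p ** Psi)) - Hp (snd p ** Psi)) (snd p))"
proof -
  obtain q J where p: "p = (q, J)" by (cases p)
  define Phi where "Phi = J ** Psi"
  define Y where "Y = d2 f (q, J)"
  have n2f: "nabla2 f (q, J) = J ** Y" "nabla2' f (q, J) = Y ** J"
    by (simp_all add: nabla2_def nabla2'_def Y_def)
  have PJ: "Psi ** J = Phi" using assms(3) by (simp add: comm_def p Phi_def)
  have cPJ: "comm Phi J = 0"
    using PJ by (simp add: comm_def Phi_def matrix_mul_assoc[symmetric])
  have c: "comm (Hm Phi) J = - comm (Hp Phi) J"
    using cPJ comm_add_l[of "Hm Phi" "Hp Phi" J] Hm_Hp[of Phi]
    by (simp add: eq_neg_iff_add_eq_0)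
  have n2: "nabla2 h p = Phi" "nabla2' h p = Phi"
    using assms PJ by (simp_all add: nabla2_def nabla2'_def p Phi_def)
  have key: "ip (Hm (J ** Y)) (Hm Phi) + ip (Hp (Y ** J)) (Hp Phi)
      - ip (Hm (Y ** J)) (Hm Phi) - ip (Hp (J ** Y)) (Hp Phi) = - 2 * ip Y (comm (Hp Phi) J)"
  proof -
    have "ip (Hm (J ** Y)) (Hm Phi) + ip (Hp (Y ** J)) (Hp Phi)
      - ip (Hm (Y ** J)) (Hm Phi) - ip (Hp (J ** Y)) (Hp Phi)
      = ip (comm J Y) (Hm Phi) - ip (comm J Y) (Hp Phi)"
      by (simp add: ip_Hm_Hm ip_Hp_Hp comm_def ip_diff_l)
    also have "\<dots> = ip Y (comm (Hm Phi) J) - ip Y (comm (Hp Phi) J)"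
      by (simp add: ip_comm2)
    finally show ?thesis by (simp add: c ip_neg_r)
  qed
  have "red_bracket2 f h p = (1/2) * (ip (nabla1 f p) (Hm0 (Phi + Phi))
      + ip (Rq q (Hp (comm Y J))) (Hm (Phi + Phi))
      + (ip (Hm (J ** Y)) (Hm Phi) + ip (Hp (Y ** J)) (Hp Phi)
      - ip (Hm (Y ** J)) (Hm Phi) - ip (Hp (J ** Y)) (Hp Phi)))"
    using assms n2 n2f unfolding p by (simp add: red_bracket2_def Y_def[symmetric])
  also have "\<dots> = ip (nabla1 f p) (Hm0 Phi) + ip Y (comm (Rq q (Hm Phi)) J)
      - ip Y (comm (Hp Phi) J)"
    unfolding key by (simp add: Hm0_double Hm_double ip_scaleR_r termR Rq_scaleR comm_scaleR_l)
  finally show ?thesis by (simp add: p Hm0_diag comm_diff_l ip_diff_r Phi_def Y_def)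
qed



lemma ip_self_adj: "ip Z (cadj Z) = (\<Sum>i\<in>UNIV. \<Sum>k\<in>UNIV. (cmod (Z $ i $ k))\<^sup>2)"
proof -
  have "ip Z (cadj Z) = (\<Sum>i\<in>UNIV. \<Sum>k\<in>UNIV. Re (Z $ i $ k * cnj (Z $ i $ k)))"
    by (simp add: ip_def mtrace_def matrix_matrix_mult_def cadj_def Re_sum)
  also have "\<dots> = (\<Sum>i\<in>UNIV. \<Sum>k\<in>UNIV. (cmod (Z $ i $ k))\<^sup>2)"
    by (simp add: complex_mult_cnj cmod_power2)
  finally show ?thesis .
qed

lemma ip_nondeg:
  assumes "\<forall>X. ip Y X = ip Y' (X::'n::finite cmat)"
  shows "Y = Y'"
proof -
  define Z where "Z = Y - Y'"
  have "ip Z (cadj Z) = 0" using assms by (simp add: Z_def ip_diff_l)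
  then have "(\<Sum>i\<in>UNIV. \<Sum>k\<in>UNIV. (cmod (Z $ i $ k))\<^sup>2) = 0" by (simp add: ip_self_adj)
  then have "\<forall>i\<in>UNIV. (\<Sum>k\<in>UNIV. (cmod (Z $ i $ k))\<^sup>2) = 0"
    by (subst (asm) sum_nonneg_eq_0_iff) (auto intro: sum_nonneg)
  then have "\<forall>i k. (cmod (Z $ i $ k))\<^sup>2 = 0"
    by (simp add: sum_nonneg_eq_0_iff)
  then have "Z = 0" by (simp add: vec_eq_iff)
  then show ?thesis by (simp add: Z_def)
qed

lemma G0m_diag: "Z \<in> G0m \<Longrightarrow> Z = diagmat (diagvec Z)"
  by (auto simp: G0m_def diagmat_def diagvec_def vec_eq_iff complex_eq_iff)

lemma ip_diagmat: "ip (diagmat a) (diagmat b) = (\<Sum>i\<in>UNIV. a $ i * b $ i)"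
proof -
  have "ip (diagmat a) (diagmat b) = (\<Sum>i\<in>UNIV. Re (\<Sum>k\<in>UNIV. (if i = k then complex_of_real (a $ i) else 0) * (if k = i then complex_of_real (b $ k) else 0)))"
    by (simp add: ip_def mtrace_def matrix_matrix_mult_def diagmat_def Re_sum)
  also have "\<dots> = (\<Sum>i\<in>UNIV. a $ i * b $ i)"
    by (intro sum.cong refl) (simp add: if_distrib if_distribR cong: if_cong)
  finally show ?thesis .
qed

lemma G0m_diff: "Y \<in> G0m \<Longrightarrow> Y' \<in> G0m \<Longrightarrow> Y - Y' \<in> G0m"
  by (simp add: G0m_def)

lemma G0m_nondeg:
  assumes "Y \<in> G0m" "Y' \<in> G0m" "\<forall>X\<in>G0m. ip Y X = ip Y' X"
  shows "Y = Y'"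
proof -
  define Z where "Z = Y - Y'"
  have Z: "Z \<in> G0m" using assms by (simp add: Z_def G0m_diff)
  have "ip Z Z = 0" using assms Z by (simp add: Z_def ip_diff_l)
  then have "ip (diagmat (diagvec Z)) (diagmat (diagvec Z)) = 0" using G0m_diag[OF Z] by simp
  then have "(\<Sum>i\<in>UNIV. (diagvec Z $ i)\<^sup>2) = 0" by (simp add: ip_diagmat power2_eq_square)
  then have "\<forall>i. diagvec Z $ i = 0" by (simp add: sum_nonneg_eq_0_iff)
  then have "diagvec Z = 0" by (simp add: vec_eq_iff)
  then have "Z = 0" using G0m_diag[OF Z] by (simp add: diagmat_def vec_eq_iff)
  then show ?thesis by (simp add: Z_def)
qed

lemma d2_eq:
  assumes "\<forall>X. ip Y X = deriv (\<lambda>t. f (fst p, snd p + t *\<^sub>R X)) 0"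
  shows "d2 f p = Y"
  unfolding d2_def
proof (rule the_equality)
  show "\<forall>X. ip Y X = deriv (\<lambda>t. f (fst p, snd p + t *\<^sub>R X)) 0" by (rule assms)
next
  fix Ya assume "\<forall>X. ip Ya X = deriv (\<lambda>t. f (fst p, snd p + t *\<^sub>R X)) 0"
  then have "\<forall>X. ip Ya X = ip Y X" using assms by simp
  then show "Ya = Y" by (rule ip_nondeg)
qed

lemma nabla1_eq:
  assumes "Y \<in> G0m" "\<forall>X\<in>G0m. ip Y X = deriv (\<lambda>t. f (fst p + t *\<^sub>R diagvec X, snd p)) 0"
  shows "nabla1 f p = Y"
  unfolding nabla1_def
proof (rule the_equality)
  show "Y \<in> G0m \<and> (\<forall>X\<in>G0m. ip Y X = deriv (\<lambda>t. f (fst p + t *\<^sub>R diagvec X, snd p)) 0)"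
    using assms by simp
next
  fix Ya assume H: "Ya \<in> G0m \<and> (\<forall>X\<in>G0m. ip Ya X = deriv (\<lambda>t. f (fst p + t *\<^sub>R diagvec X, snd p)) 0)"
  then have "\<forall>X\<in>G0m. ip Ya X = ip Y X" using assms by simp
  then show "Ya = Y" using H assms(1) G0m_nondeg by blast
qed

lemma zero_G0m: "0 \<in> G0m" by (simp add: G0m_def)

lemma nabla1_noq:
  assumes "\<And>q q' J. f (q, J) = f (q', J)"
  shows "nabla1 f p = 0"
proof (rule nabla1_eq[OF zero_G0m], intro ballI)
  fix X :: "'a cmat"
  have "(\<lambda>t. f (fst p + t *\<^sub>R diagvec X, snd p)) = (\<lambda>t. f p)"
    using assms by (metis prod.collapse)
  then show "ip 0 X = deriv (\<lambda>t. f (fst p + t *\<^sub>R diagvec X, snd p)) 0" by simp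
qed



lemma bb_mult: "bounded_bilinear (\<lambda>(A::'n::finite cmat) (B::'n cmat). A ** B)"
  by (subst bilinear_conv_bounded_bilinear[symmetric])
     (auto simp: bilinear_def matrix_add_ldistrib matrix_add_rdistrib' matrix_scalar_ac
        scalar_matrix_assoc[symmetric] intro!: linearI)

fun Dm :: "'n::finite cmat \<Rightarrow> 'n cmat \<Rightarrow> nat \<Rightarrow> 'n cmat" where
  "Dm J X 0 = 0"
| "Dm J X (Suc m) = J ** Dm J X m + X ** matpow J m"

lemma matpow_deriv:
  "((\<lambda>t. matpow (J + t *\<^sub>R X) m) has_vector_derivative Dm J X m) (at 0)"
proof (induction m)
  case 0
  then show ?case by simp
next
  case (Suc m)
  have l: "((\<lambda>t::real. J + t *\<^sub>R X) has_vector_derivative X) (at 0)"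
    by (auto intro!: derivative_eq_intros)
  have "((\<lambda>t. (J + t *\<^sub>R X) ** matpow (J + t *\<^sub>R X) m) has_vector_derivative
      ((J + 0 *\<^sub>R X) ** Dm J X m + X ** matpow (J + 0 *\<^sub>R X) m)) (at 0)"
    by (rule bounded_bilinear.has_vector_derivative[OF bb_mult l Suc.IH])
  then show ?case by (simp add: matpow_Suc)
qed

lemma trace_Dm:
  "trace (matpow J a ** Dm J X m) = of_nat m * trace (matpow J (a + m - 1) ** X)"
proof (induction m arbitrary: a)
  case 0
  then show ?case by (simp add: trace_def)
next
  case (Suc m)
  have 1: "trace (matpow J a ** (J ** Dm J X m)) = trace (matpow J (a + 1) ** Dm J X m)"
    by (simp add: matrix_mul_assoc matpow_Suc')
  have 2: "trace (matpow J a ** (X ** matpow J m)) = trace (matpow J (a + m) ** X)"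
  proof -
    have "trace (matpow J a ** (X ** matpow J m)) = trace ((matpow J m ** matpow J a) ** X)"
      by (metis matrix_mul_assoc trace_comm)
    then show ?thesis by (simp add: matpow_add[symmetric] add.commute)
  qed
  show ?case
  proof (cases m)
    case 0
    then show ?thesis
      by (simp add: matrix_add_ldistrib trace_add 2)
  next
    case (Suc m')
    have "a + 1 + m - 1 = a + m" using Suc by simp
    then show ?thesis
      using Suc.IH[of "a+1"]
      by (simp add: matrix_add_ldistrib trace_add 1 2 algebra_simps)
  qed
qed

lemma bl_Re_trace: "bounded_linear (\<lambda>M::'n::finite cmat. Re (trace M))"
  by (subst linear_conv_bounded_linear[symmetric])
     (auto intro!: linearI simp: trace_add trace_scaleR)
lemma bl_Im_trace: "bounded_linear (\<lambda>M::'n::finite cmat. Im (trace M))"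
  by (subst linear_conv_bounded_linear[symmetric])
     (auto intro!: linearI simp: trace_add trace_scaleR)

lemma deriv_Re_trace_pow:
  "deriv (\<lambda>t. Re (trace (matpow (J + t *\<^sub>R X) m))) 0 = Re (trace (Dm J X m))"
proof -
  have "((\<lambda>t. Re (trace (matpow (J + t *\<^sub>R X) m))) has_vector_derivative Re (trace (Dm J X m))) (at 0)"
    by (rule bounded_linear.has_vector_derivative[OF bl_Re_trace matpow_deriv])
  then show ?thesis
    by (simp add: has_real_derivative_iff_has_vector_derivative[symmetric] DERIV_imp_deriv)
qed

lemma deriv_Im_trace_pow:
  "deriv (\<lambda>t. Im (trace (matpow (J + t *\<^sub>R X) m))) 0 = Im (trace (Dm J X m))"
proof -
  have "((\<lambda>t. Im (trace (matpow (J + t *\<^sub>R X) m))) has_vector_derivative Im (trace (Dm J X m))) (at 0)"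
    by (rule bounded_linear.has_vector_derivative[OF bl_Im_trace matpow_deriv])
  then show ?thesis
    by (simp add: has_real_derivative_iff_has_vector_derivative[symmetric] DERIV_imp_deriv)
qed

lemma d2_hk:
  assumes "m \<ge> 1"
  shows "d2 (hk m) p = matpow (snd p) (m - 1)"
proof (rule d2_eq, intro allI)
  fix X
  have "deriv (\<lambda>t. hk m (fst p, snd p + t *\<^sub>R X)) 0
      = deriv (\<lambda>t. (1 / real m) * Re (trace (matpow (snd p + t *\<^sub>R X) m))) 0"
    by (simp add: hk_def mtrace_eq)
  also have "\<dots> = (1 / real m) * Re (trace (Dm (snd p) X m))"
  proof -
    have "((\<lambda>t. Re (trace (matpow (snd p + t *\<^sub>R X) m))) has_real_derivative Re (trace (Dm (snd p) X m))) (at 0)"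
      by (simp add: has_real_derivative_iff_has_vector_derivative
          bounded_linear.has_vector_derivative[OF bl_Re_trace matpow_deriv])
    then have "((\<lambda>t. (1 / real m) * Re (trace (matpow (snd p + t *\<^sub>R X) m))) has_real_derivative (1 / real m) * Re (trace (Dm (snd p) X m))) (at 0)"
      by (rule DERIV_cmult)
    then show ?thesis by (rule DERIV_imp_deriv)
  qed
  also have "\<dots> = Re (trace (matpow (snd p) (m - 1) ** X))"
    using trace_Dm[of "snd p" 0 X m] assms by simp
  finally show "ip (matpow (snd p) (m - 1)) X = deriv (\<lambda>t. hk m (fst p, snd p + t *\<^sub>R X)) 0"
    by (simp add: ip_def mtrace_eq)
qed

lemma trace_csmul: "trace (csmul c A ** X) = c * trace (A ** X)"
  by (simp add: trace_def csmul_def matrix_matrix_mult_def sum_distrib_left mult.assoc)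

lemma d2_htk:
  assumes "m \<ge> 1"
  shows "d2 (htk m) p = csmul (- \<i>) (matpow (snd p) (m - 1))"
proof (rule d2_eq, intro allI)
  fix X
  have "deriv (\<lambda>t. htk m (fst p, snd p + t *\<^sub>R X)) 0
      = deriv (\<lambda>t. (1 / real m) * Im (trace (matpow (snd p + t *\<^sub>R X) m))) 0"
    by (simp add: htk_def mtrace_eq)
  also have "\<dots> = (1 / real m) * Im (trace (Dm (snd p) X m))"
  proof -
    have "((\<lambda>t. Im (trace (matpow (snd p + t *\<^sub>R X) m))) has_real_derivative Im (trace (Dm (snd p) X m))) (at 0)"
      by (simp add: has_real_derivative_iff_has_vector_derivative
          bounded_linear.has_vector_derivative[OF bl_Im_trace matpow_deriv])
    then have "((\<lambda>t. (1 / real m) * Im (trace (matpow (snd p + t *\<^sub>R X) m))) has_real_derivative (1 / real m) * Im (trace (Dm (snd p) X m))) (at 0)"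
      by (rule DERIV_cmult)
    then show ?thesis by (rule DERIV_imp_deriv)
  qed
  also have "\<dots> = Im (trace (matpow (snd p) (m - 1) ** X))"
    using trace_Dm[of "snd p" 0 X m] assms by simp
  finally show "ip (csmul (- \<i>) (matpow (snd p) (m - 1))) X = deriv (\<lambda>t. htk m (fst p, snd p + t *\<^sub>R X)) 0"
    by (simp add: ip_def mtrace_eq trace_csmul)
qed

lemma nabla1_hk: "nabla1 (hk m) p = 0" by (rule nabla1_noq) (simp add: hk_def)
lemma nabla1_htk: "nabla1 (htk m) p = 0" by (rule nabla1_noq) (simp add: htk_def)



lemma Ck_const: "Ck_on k S (\<lambda>x. c)"
proof (induction k arbitrary: c)
  case 0
  then show ?case by simp
next
  case (Suc k)
  have "\<And>x. frechet_derivative (\<lambda>x. c) (at x) = (\<lambda>h. 0)"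
    by (metis frechet_derivative_at has_derivative_const)
  then show ?case using Suc by simp
qed

lemma Ck_linear:
  assumes "bounded_linear f"
  shows "Ck_on k S f"
proof (cases k)
  case 0
  then show ?thesis using assms by (simp add: linear_continuous_on)
next
  case (Suc k')
  have fd: "\<And>x. frechet_derivative f (at x) = f"
    using assms by (metis frechet_derivative_at bounded_linear_imp_has_derivative)
  have "\<And>x. f differentiable (at x)"
    using assms bounded_linear_imp_differentiable by blast
  then show ?thesis using Suc by (simp add: fd Ck_const)
qed

lemma smooth_linear: "bounded_linear f \<Longrightarrow> smooth_on S f"
  by (simp add: smooth_on_def Ck_linear)

definition fq :: "'n::finite \<Rightarrow> 'n point \<Rightarrow> real" where
  "fq j p = fst p $ j"
definition fA :: "'n::finite cmat \<Rightarrow> 'n point \<Rightarrow> real" where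
  "fA A p = ip A (snd p)"

lemma smooth_fq: "smooth_on S (fq j)"
  by (rule smooth_linear, subst linear_conv_bounded_linear[symmetric])
     (auto intro!: linearI simp: fq_def)

lemma smooth_fA: "smooth_on S (fA A)"
  by (rule smooth_linear, subst linear_conv_bounded_linear[symmetric])
     (auto intro!: linearI simp: fA_def ip_add_r ip_scaleR_r)

definition Ej :: "'n::finite \<Rightarrow> 'n cmat" where
  "Ej j = diagmat (axis j 1)"

lemma Ej_G0m: "Ej j \<in> G0m"
  by (simp add: Ej_def G0m_def diagmat_def)

lemma ip_Ej_diag: "ip (Ej j) (diagmat v) = v $ j"
proof -
  have "\<And>i. axis j 1 $ i * v $ i = (if i = j then v $ j else 0)" by (simp add: axis_def)
  then show ?thesis by (simp add: Ej_def ip_diagmat)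
qed

lemma ip_Ej: "X \<in> G0m \<Longrightarrow> ip (Ej j) X = diagvec X $ j"
  by (subst G0m_diag[of X]) (simp_all add: ip_Ej_diag)

lemma nabla1_fq: "nabla1 (fq j) p = Ej j"
proof (rule nabla1_eq[OF Ej_G0m], intro ballI)
  fix X :: "'a cmat" assume X: "X \<in> G0m"
  have "((\<lambda>t. fst p $ j + t * diagvec X $ j) has_real_derivative diagvec X $ j) (at 0)"
    by (auto intro!: derivative_eq_intros)
  then have "deriv (\<lambda>t. fst p $ j + t * diagvec X $ j) 0 = diagvec X $ j"
    by (rule DERIV_imp_deriv)
  then show "ip (Ej j) X = deriv (\<lambda>t. fq j (fst p + t *\<^sub>R diagvec X, snd p)) 0"
    by (simp add: fq_def ip_Ej[OF X])
qed

lemma d2_fq: "d2 (fq j) p = 0"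
  by (rule d2_eq) (simp add: fq_def)

lemma nabla1_fA: "nabla1 (fA A) p = 0"
  by (rule nabla1_noq) (simp add: fA_def)

lemma d2_fA: "d2 (fA A) p = A"
proof (rule d2_eq, intro allI)
  fix X
  have "((\<lambda>t. ip A (snd p) + t * ip A X) has_real_derivative ip A X) (at 0)"
    by (auto intro!: derivative_eq_intros)
  then have "deriv (\<lambda>t. ip A (snd p) + t * ip A X) 0 = ip A X"
    by (rule DERIV_imp_deriv)
  then show "ip A X = deriv (\<lambda>t. fA A (fst p, snd p + t *\<^sub>R X)) 0"
    by (simp add: fA_def ip_add_r ip_scaleR_r)
qed



lemma ham_char:
  fixes h :: "'n::{finite,linorder} point \<Rightarrow> real" and Eq EQ0 :: "'n::{finite,linorder} point \<Rightarrow> real^'n::{finite,linorder}"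
    and EJ EJ0 :: "'n::{finite,linorder} point \<Rightarrow> 'n::{finite,linorder} cmat"
  assumes br: "\<And>f p. p \<in> M0reg \<Longrightarrow> red_bracket i f h p = ip (nabla1 f p) (diagmat (EQ0 p)) + ip (d2 f p) (EJ0 p)"
  shows "is_ham_vf i h Eq EJ \<longleftrightarrow> (\<forall>p\<in>M0reg. Eq p = EQ0 p \<and> EJ p = EJ0 p)"
proof
  assume H: "is_ham_vf i h Eq EJ"
  show "\<forall>p\<in>M0reg. Eq p = EQ0 p \<and> EJ p = EJ0 p"
  proof
    fix p :: "'n::{finite,linorder} point" assume p: "p \<in> M0reg"
    have "\<forall>j. Eq p $ j = EQ0 p $ j"
    proof
      fix j
      have "vf_apply Eq EJ (fq j) p = red_bracket i (fq j) h p"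
        using H p smooth_fq unfolding is_ham_vf_def by blast
      then show "Eq p $ j = EQ0 p $ j"
        using br[OF p, of "fq j"] by (simp add: vf_apply_def nabla1_fq d2_fq ip_Ej_diag)
    qed
    moreover have "\<forall>A. ip (EJ p) A = ip (EJ0 p) A"
    proof
      fix A
      have "vf_apply Eq EJ (fA A) p = red_bracket i (fA A) h p"
        using H p smooth_fA unfolding is_ham_vf_def by blast
      then show "ip (EJ p) A = ip (EJ0 p) A"
        using br[OF p, of "fA A"] by (simp add: vf_apply_def nabla1_fA d2_fA ip_sym)
    qed
    ultimately show "Eq p = EQ0 p \<and> EJ p = EJ0 p"
      using ip_nondeg by (simp add: vec_eq_iff) blast
  qed
next
  assume "\<forall>p\<in>M0reg. Eq p = EQ0 p \<and> EJ p = EJ0 p"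
  then show "is_ham_vf i h Eq EJ"
    unfolding is_ham_vf_def by (simp add: vf_apply_def br)
qed

lemma comm_matpow: "comm (matpow J K) J = 0"
  by (simp add: comm_def matpow_comm)

lemma csmul_mult_r: "A ** csmul c B = csmul c (A ** (B::'n::finite cmat))"
  by (simp add: csmul_def matrix_matrix_mult_def vec_eq_iff sum_distrib_left mult.left_commute)
lemma csmul_mult_l: "csmul c B ** A = csmul c (B ** (A::'n::finite cmat))"
  by (simp add: csmul_def matrix_matrix_mult_def vec_eq_iff sum_distrib_left mult.assoc)
lemma csmul_zero[simp]: "csmul c 0 = 0" by (simp add: csmul_def vec_eq_iff)
lemma comm_csmul: "comm (csmul c B) A = csmul c (comm B A)"
  unfolding comm_def csmul_mult_r csmul_mult_l by (simp add: csmul_def vec_eq_iff algebra_simps)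

lemma E_char:
  fixes Eq :: "'n::{finite,linorder} point \<Rightarrow> real^'n::{finite,linorder}" and EJ :: "'n::{finite,linorder} point \<Rightarrow> 'n::{finite,linorder} cmat"
  assumes "K \<ge> 1" "i \<in> {1, 2}"
  shows "is_ham_vf i (hk (if i = 2 then K else K + 1)) Eq EJ \<longleftrightarrow>
    (\<forall>p\<in>M0reg. Eq p = (\<chi> j. Re (matpow (snd p) K $ j $ j)) \<and>
       EJ p = comm (Rq (fst p) (Hm (matpow (snd p) K)) - Hp (matpow (snd p) K)) (snd p))"
proof (rule ham_char)
  fix f and p :: "'n::{finite,linorder} point"
  show "red_bracket i f (hk (if i = 2 then K else K + 1)) p =
    ip (nabla1 f p) (diagmat (\<chi> j. Re (matpow (snd p) K $ j $ j))) +
    ip (d2 f p) (comm (Rq (fst p) (Hm (matpow (snd p) K)) - Hp (matpow (snd p) K)) (snd p))"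
  proof (cases "i = 2")
    case True
    obtain K' where K': "K = Suc K'" using assms(1) by (cases K) auto
    have "snd p ** matpow (snd p) (K - 1) = matpow (snd p) K"
      by (simp add: K' matpow_Suc)
    moreover have d: "d2 (hk K) p = matpow (snd p) (K - 1)" using d2_hk assms(1) by blast
    ultimately show ?thesis
      using True core2[OF nabla1_hk d comm_matpow, of f] assms
      by (simp add: red_bracket_def)
  next
    case False
    then have "i = 1" using assms by auto
    moreover have d: "d2 (hk (K + 1)) p = matpow (snd p) K" using d2_hk[of "K + 1" p] by simp
    ultimately show ?thesis
      using core1[OF nabla1_hk d comm_matpow, of f]
      by (simp add: red_bracket_def)
  qed
qed

lemma T_char:
  fixes Eq :: "'n::{finite,linorder} point \<Rightarrow> real^'n::{finite,linorder}" and EJ :: "'n::{finite,linorder} point \<Rightarrow> 'n::{finite,linorder} cmat"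
  assumes "K \<ge> 1" "i \<in> {1, 2}"
  shows "is_ham_vf i (htk (if i = 2 then K else K + 1)) Eq EJ \<longleftrightarrow>
    (\<forall>p\<in>M0reg. Eq p = (\<chi> j. Re (csmul (- \<i>) (matpow (snd p) K) $ j $ j)) \<and>
       EJ p = comm (Rq (fst p) (Hm (csmul (- \<i>) (matpow (snd p) K))) - Hp (csmul (- \<i>) (matpow (snd p) K))) (snd p))"
proof (rule ham_char)
  fix f and p :: "'n::{finite,linorder} point"
  have cm: "\<And>m. comm (csmul (- \<i>) (matpow (snd p) m)) (snd p) = 0"
    by (simp add: comm_csmul comm_matpow)
  show "red_bracket i f (htk (if i = 2 then K else K + 1)) p =
    ip (nabla1 f p) (diagmat (\<chi> j. Re (csmul (- \<i>) (matpow (snd p) K) $ j $ j))) +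
    ip (d2 f p) (comm (Rq (fst p) (Hm (csmul (- \<i>) (matpow (snd p) K))) - Hp (csmul (- \<i>) (matpow (snd p) K))) (snd p))"
  proof (cases "i = 2")
    case True
    obtain K' where K': "K = Suc K'" using assms(1) by (cases K) auto
    have "snd p ** csmul (- \<i>) (matpow (snd p) (K - 1)) = csmul (- \<i>) (matpow (snd p) K)"
      by (simp add: K' matpow_Suc csmul_mult_r)
    moreover have d: "d2 (htk K) p = csmul (- \<i>) (matpow (snd p) (K - 1))" using d2_htk assms(1) by blast
    ultimately show ?thesis
      using True core2[OF nabla1_htk d cm, of f] assms
      by (simp add: red_bracket_def)
  next
    case False
    then have "i = 1" using assms by auto
    moreover have d: "d2 (htk (K + 1)) p = csmul (- \<i>) (matpow (snd p) K)" using d2_htk[of "K + 1" p] by simp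
    ultimately show ?thesis
      using core1[OF nabla1_htk d cm, of f]
      by (simp add: red_bracket_def)
  qed
qed



lemma cadj_matpow: "cadj (matpow X k) = matpow (cadj X) k"
  by (induction k) (simp_all add: matpow_Suc cadj_mult matpow_comm)

lemma matpow_scaleR: "matpow (s *\<^sub>R X) k = (s ^ k) *\<^sub>R matpow (X::'n::finite cmat) k"
  by (induction k) (simp_all add: matpow_Suc scalar_matrix_assoc[symmetric] matrix_scalar_ac)

lemma cadj_csmul: "cadj (csmul c X) = csmul (cnj c) (cadj X)"
  by (simp add: cadj_def csmul_def vec_eq_iff)

lemma csmul_neg: "csmul c (- X) = - csmul c X" by (simp add: csmul_def vec_eq_iff)
lemma csmul_i: "csmul \<i> X = - csmul (- \<i>) X" by (simp add: csmul_def vec_eq_iff)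

lemma comm_scaleR_r: "comm A (s *\<^sub>R B) = s *\<^sub>R comm A (B::'n::finite cmat)"
  by (metis comm_swap comm_scaleR_l scaleR_minus_right)
lemma comm_neg_r: "comm A (- B) = - comm A (B::'n::finite cmat)"
  by (metis comm_swap comm_neg_l)

lemma L_anti: "cadj Phi = - Phi \<Longrightarrow> comm Phi J = 0 \<Longrightarrow> comm (Rq q (Hm Phi) - Hp Phi) J = 0"
  by (simp add: Hm_anti Hp_anti comm_neg_l)
lemma L_herm: "cadj Phi = Phi \<Longrightarrow> comm (Rq q (Hm Phi) - Hp Phi) J = comm (Rq q Phi) J"
  by (simp add: Hm_herm Hp_herm)
lemma L_herm2: "cadj Phi = Phi \<Longrightarrow> cadj J = s *\<^sub>R J \<Longrightarrow> cadj (comm (Rq q Phi) J) = s *\<^sub>R comm (Rq q Phi) J"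
  by (simp add: cadj_comm cadj_Rq comm_neg_r comm_scaleR_l comm_swap[of J])

lemma cadj_nth: "cadj X $ i $ j = cnj (X $ j $ i)" by (simp add: cadj_def)

lemma herm_diag_Im: "cadj X = X \<Longrightarrow> Im (X $ j $ j) = 0"
proof -
  assume h: "cadj X = X"
  have "cnj (X $ j $ j) = X $ j $ j" using cadj_nth[of X j j] h by simp
  then show ?thesis by (simp add: complex_eq_iff)
qed
lemma herm_diag: "cadj X = X \<Longrightarrow> complex_of_real (Re (X $ j $ j)) = X $ j $ j"
  using herm_diag_Im[of X j] by (simp add: complex_eq_iff)
lemma anti_diag_Re: "cadj X = - X \<Longrightarrow> Re (X $ j $ j) = 0"
proof -
  assume h: "cadj X = - X"
  have "cnj (X $ j $ j) = - X $ j $ j" using cadj_nth[of X j j] h by simp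
  then show ?thesis by (simp add: complex_eq_iff)
qed

lemma herm_pow: "cadj J = J \<Longrightarrow> cadj (matpow J K) = matpow J K"
  by (simp add: cadj_matpow)
lemma anti_pow: "cadj J = - J \<Longrightarrow> cadj (matpow J K) = ((-1::real) ^ K) *\<^sub>R matpow J K"
  by (simp add: cadj_matpow matpow_scaleR[of "-1", simplified, symmetric])
lemma anti_pow_even: "cadj J = - J \<Longrightarrow> even K \<Longrightarrow> cadj (matpow J K) = matpow J K"
  by (simp add: anti_pow)
lemma anti_pow_odd: "cadj J = - J \<Longrightarrow> odd K \<Longrightarrow> cadj (matpow J K) = - matpow J K"
  by (simp add: anti_pow)

lemma cadj_csmul_herm: "cadj X = X \<Longrightarrow> cadj (csmul (- \<i>) X) = - csmul (- \<i>) X"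
  by (simp add: cadj_csmul csmul_i)
lemma cadj_csmul_anti: "cadj X = - X \<Longrightarrow> cadj (csmul (- \<i>) X) = csmul (- \<i>) X"
  by (simp add: cadj_csmul csmul_i csmul_neg)

lemma comm_csmul_pow: "comm (csmul c (matpow J K)) J = 0"
  by (simp add: comm_csmul comm_matpow)

lemma Erhs: "(1/2::real) *\<^sub>R comm (Rq q (Psi + cadj Psi) + (cadj Psi - Psi)) J
   = comm (Rq q (Hm Psi) - Hp Psi) J"
proof -
  have "Rq q (Hm Psi) - Hp Psi = (1/2::real) *\<^sub>R (Rq q (Psi + cadj Psi) + (cadj Psi - Psi))"
    by (simp add: Hm_def Hp_def Rq_scaleR Rq_add algebra_simps)
  then show ?thesis by (simp add: comm_scaleR_l)
qed

lemma Trhs: "(1/2::real) *\<^sub>R comm (csmul \<i> (Rq q (cadj Psi - Psi)) + csmul \<i> (Psi + cadj Psi)) J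
   = comm (Rq q (Hm (csmul (- \<i>) Psi)) - Hp (csmul (- \<i>) Psi)) J"
proof -
  have "Rq q (Hm (csmul (- \<i>) Psi)) - Hp (csmul (- \<i>) Psi)
     = (1/2::real) *\<^sub>R (csmul \<i> (Rq q (cadj Psi - Psi)) + csmul \<i> (Psi + cadj Psi))"
    by (simp add: Hm_def Hp_def Rq_def csmul_def cadj_def vec_eq_iff scaleR_conv_of_real algebra_simps)
  then show ?thesis by (simp add: comm_scaleR_l)
qed



lemma E_tanM:
  assumes "cadj J = J"
  shows "Hp (comm (Rq q (Hm (matpow J K)) - Hp (matpow J K)) J) = 0 \<and>
         Hm (comm (Rq q (Hm (matpow J K)) - Hp (matpow J K)) J) = comm (Rq q (matpow (Hm J) K)) (Hm J)"
proof -
  have P: "cadj (matpow J K) = matpow J K" using assms by (rule herm_pow)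
  have e: "comm (Rq q (Hm (matpow J K)) - Hp (matpow J K)) J = comm (Rq q (matpow J K)) J"
    using P by (rule L_herm)
  have "cadj (comm (Rq q (matpow J K)) J) = comm (Rq q (matpow J K)) J"
    using L_herm2[OF P, of J 1 q] assms by simp
  then show ?thesis using e Hm_herm[OF assms] by (simp add: Hp_herm Hm_herm)
qed

lemma E_tanP:
  assumes "cadj J = - J"
  shows "Hm (comm (Rq q (Hm (matpow J K)) - Hp (matpow J K)) J) = 0"
proof (cases "even K")
  case True
  have P: "cadj (matpow J K) = matpow J K" using anti_pow_even[OF assms True] .
  have "cadj (comm (Rq q (matpow J K)) J) = - comm (Rq q (matpow J K)) J"
    using L_herm2[OF P, of J "-1" q] assms by simp
  then show ?thesis using L_herm[OF P] by (simp add: Hm_anti)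
next
  case False
  have P: "cadj (matpow J K) = - matpow J K" using anti_pow_odd[OF assms] False by simp
  then show ?thesis using L_anti[OF P comm_matpow] by simp
qed

lemma T_tanM:
  assumes "cadj J = J"
  shows "(\<chi> j. Re (csmul (- \<i>) (matpow J K) $ j $ j)) = 0 \<and>
     comm (Rq q (Hm (csmul (- \<i>) (matpow J K))) - Hp (csmul (- \<i>) (matpow J K))) J = 0"
proof -
  have P: "cadj (matpow J K) = matpow J K" using assms by (rule herm_pow)
  have "cadj (csmul (- \<i>) (matpow J K)) = - csmul (- \<i>) (matpow J K)" using P by (rule cadj_csmul_herm)
  then have "comm (Rq q (Hm (csmul (- \<i>) (matpow J K))) - Hp (csmul (- \<i>) (matpow J K))) J = 0"
    using L_anti comm_csmul_pow by blast
  moreover have "(\<chi> j. Re (csmul (- \<i>) (matpow J K) $ j $ j)) = 0"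
    using herm_diag_Im[OF P] by (simp add: csmul_def vec_eq_iff)
  ultimately show ?thesis by simp
qed

lemma T_tanP:
  assumes "cadj J = - J"
  shows "Hm (comm (Rq q (Hm (csmul (- \<i>) (matpow J K))) - Hp (csmul (- \<i>) (matpow J K))) J) = 0"
proof (cases "even K")
  case True
  have P: "cadj (matpow J K) = matpow J K" using anti_pow_even[OF assms True] .
  have "cadj (csmul (- \<i>) (matpow J K)) = - csmul (- \<i>) (matpow J K)" using P by (rule cadj_csmul_herm)
  then show ?thesis using L_anti comm_csmul_pow by (metis Hm_zero)
next
  case False
  have P: "cadj (matpow J K) = - matpow J K" using anti_pow_odd[OF assms] False by simp
  have Q: "cadj (csmul (- \<i>) (matpow J K)) = csmul (- \<i>) (matpow J K)" using P by (rule cadj_csmul_anti)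
  have "cadj (comm (Rq q (csmul (- \<i>) (matpow J K))) J) = - comm (Rq q (csmul (- \<i>) (matpow J K))) J"
    using L_herm2[OF Q, of J "-1" q] assms by simp
  then show ?thesis using L_herm[OF Q] by (simp add: Hm_anti)
qed

lemma U5:
  assumes "cadj J = - J" "odd K"
  shows "(\<chi> j. Re (matpow J K $ j $ j)) = 0 \<and> comm (Rq q (Hm (matpow J K)) - Hp (matpow J K)) J = 0"
proof -
  have P: "cadj (matpow J K) = - matpow J K" using anti_pow_odd[OF assms] .
  then show ?thesis using L_anti[OF P comm_matpow] anti_diag_Re[OF P] by (simp add: vec_eq_iff)
qed

lemma U6:
  assumes "cadj J = - J" "even K"
  shows "(\<chi> j. Re (csmul (- \<i>) (matpow J K) $ j $ j)) = 0 \<and>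
     comm (Rq q (Hm (csmul (- \<i>) (matpow J K))) - Hp (csmul (- \<i>) (matpow J K))) J = 0"
proof -
  have P: "cadj (matpow J K) = matpow J K" using anti_pow_even[OF assms] .
  have "cadj (csmul (- \<i>) (matpow J K)) = - csmul (- \<i>) (matpow J K)" using P by (rule cadj_csmul_herm)
  then have "comm (Rq q (Hm (csmul (- \<i>) (matpow J K))) - Hp (csmul (- \<i>) (matpow J K))) J = 0"
    using L_anti comm_csmul_pow by blast
  moreover have "(\<chi> j. Re (csmul (- \<i>) (matpow J K) $ j $ j)) = 0"
    using herm_diag_Im[OF P] by (simp add: csmul_def vec_eq_iff)
  ultimately show ?thesis by simp
qed

lemma U7:
  assumes "cadj J = - J" "even K"
  shows "Hp (comm (Rq q (Hm (matpow J K)) - Hp (matpow J K)) J) = comm (Rq q (matpow (Hp J) K)) (Hp J)"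
proof -
  have P: "cadj (matpow J K) = matpow J K" using anti_pow_even[OF assms] .
  have "cadj (comm (Rq q (matpow J K)) J) = - comm (Rq q (matpow J K)) J"
    using L_herm2[OF P, of J "-1" q] assms by simp
  then show ?thesis using L_herm[OF P] Hp_anti[OF assms(1)] by (simp add: Hp_anti)
qed

lemma U8:
  assumes "cadj J = - J" "odd K"
  shows "Hp (comm (Rq q (Hm (csmul (- \<i>) (matpow J K))) - Hp (csmul (- \<i>) (matpow J K))) J)
       = comm (csmul (- \<i>) (Rq q (matpow (Hp J) K))) (Hp J)"
proof -
  have P: "cadj (matpow J K) = - matpow J K" using anti_pow_odd[OF assms] .
  have Q: "cadj (csmul (- \<i>) (matpow J K)) = csmul (- \<i>) (matpow J K)" using P by (rule cadj_csmul_anti)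
  have "cadj (comm (Rq q (csmul (- \<i>) (matpow J K))) J) = - comm (Rq q (csmul (- \<i>) (matpow J K))) J"
    using L_herm2[OF Q, of J "-1" q] assms by simp
  then show ?thesis using L_herm[OF Q] Hp_anti[OF assms(1)] by (simp add: Hp_anti Rq_csmul)
qed

lemma allp: "(\<forall>p\<in>M0reg. P p) \<longleftrightarrow> (\<forall>q J. (q, J) \<in> M0reg \<longrightarrow> P (q, J))"
  by auto

lemma item_E:
  assumes "K \<ge> 1" "i \<in> {1, 2}"
  shows "is_ham_vf i (hk (if i = 2 then K else K + 1)) Eq EJ \<longleftrightarrow>
       (\<forall>q J. (q, J) \<in> M0reg \<longrightarrow>
          (\<forall>j. Eq (q, J) $ j = Re (matpow J K $ j $ j)) \<and>
          EJ (q, J) = (1/2::real) *\<^sub>R comm (Rq q (matpow J K + cadj (matpow J K))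
                                         + (cadj (matpow J K) - matpow J K)) J)"
  unfolding E_char[OF assms] allp Erhs by (simp add: vec_eq_iff)

lemma item_T:
  assumes "K \<ge> 1" "i \<in> {1, 2}"
  shows "is_ham_vf i (htk (if i = 2 then K else K + 1)) Eq EJ \<longleftrightarrow>
       (\<forall>q J. (q, J) \<in> M0reg \<longrightarrow>
          (\<forall>j. Eq (q, J) $ j = Re (- \<i> * matpow J K $ j $ j)) \<and>
          EJ (q, J) = (1/2::real) *\<^sub>R comm (csmul \<i> (Rq q (cadj (matpow J K) - matpow J K))
                                         + csmul \<i> (matpow J K + cadj (matpow J K))) J)"
  unfolding T_char[OF assms] allp Trhs by (simp add: vec_eq_iff csmul_def)


lemma sndE: "is_ham_vf i (hk (if i = 2 then K else K + 1)) Eq EJ \<Longrightarrow> K \<ge> 1 \<Longrightarrow> i \<in> {1,2} \<Longrightarrow> (q, J) \<in> M0reg \<Longrightarrow>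
   Eq (q, J) = (\<chi> j. Re (matpow J K $ j $ j)) \<and> EJ (q, J) = comm (Rq q (Hm (matpow J K)) - Hp (matpow J K)) J"
  using E_char[of K i Eq EJ] by fastforce
lemma sndT: "is_ham_vf i (htk (if i = 2 then K else K + 1)) Eq EJ \<Longrightarrow> K \<ge> 1 \<Longrightarrow> i \<in> {1,2} \<Longrightarrow> (q, J) \<in> M0reg \<Longrightarrow>
   Eq (q, J) = (\<chi> j. Re (csmul (- \<i>) (matpow J K) $ j $ j)) \<and>
   EJ (q, J) = comm (Rq q (Hm (csmul (- \<i>) (matpow J K))) - Hp (csmul (- \<i>) (matpow J K))) J"
  using T_char[of K i Eq EJ] by fastforce

theorem proposition3p8:
  fixes k l :: nat
  assumes "k \<ge> 1" and "l \<ge> 1"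
  shows "\<forall>i\<in>{1::nat, 2}. \<forall>(Eq :: 'n::{finite,linorder} point \<Rightarrow> real^('n::{finite,linorder}))
      (EJ :: 'n::{finite,linorder} point \<Rightarrow> 'n::{finite,linorder} cmat).
    \<comment> \<open>E^2_k = E^1_{k+1}: explicit formula\<close>
    (is_ham_vf i (hk (if i = 2 then k else k + 1)) Eq EJ \<longleftrightarrow>
       (\<forall>q J. (q, J) \<in> M0reg \<longrightarrow>
          (\<forall>j. Eq (q, J) $ j = Re (matpow J k $ j $ j)) \<and>
          EJ (q, J) = (1/2::real) *\<^sub>R comm (Rq q (matpow J k + cadj (matpow J k))
                                         + (cadj (matpow J k) - matpow J k)) J))
  \<and> \<comment> \<open>tilde E^2_k = tilde E^1_{k+1}: explicit formula\<close>
    (is_ham_vf i (htk (if i = 2 then k else k + 1)) Eq EJ \<longleftrightarrow>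
       (\<forall>q J. (q, J) \<in> M0reg \<longrightarrow>
          (\<forall>j. Eq (q, J) $ j = Re (- \<i> * matpow J k $ j $ j)) \<and>
          EJ (q, J) = (1/2::real) *\<^sub>R comm (csmul \<i> (Rq q (cadj (matpow J k) - matpow J k))
                                         + csmul \<i> (matpow J k + cadj (matpow J k))) J))
  \<and> \<comment> \<open>E: tangency to M_{0,-} and M_{0,+}, and the restriction V to M_{0,-}\<close>
    (is_ham_vf i (hk (if i = 2 then k else k + 1)) Eq EJ \<longrightarrow>
       (\<forall>q J. (q, J) \<in> M0reg \<and> Hp J = 0 \<longrightarrow>
          Hp (EJ (q, J)) = 0 \<and>
          (\<forall>j. complex_of_real (Eq (q, J) $ j) = matpow (Hm J) k $ j $ j) \<and>
          Hm (EJ (q, J)) = comm (Rq q (matpow (Hm J) k)) (Hm J)) \<and>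
       (\<forall>q J. (q, J) \<in> M0reg \<and> Hm J = 0 \<longrightarrow> Hm (EJ (q, J)) = 0))
  \<and> \<comment> \<open>tilde E: tangency, and the restriction to M_{0,-} vanishes\<close>
    (is_ham_vf i (htk (if i = 2 then k else k + 1)) Eq EJ \<longrightarrow>
       (\<forall>q J. (q, J) \<in> M0reg \<and> Hp J = 0 \<longrightarrow> Eq (q, J) = 0 \<and> EJ (q, J) = 0) \<and>
       (\<forall>q J. (q, J) \<in> M0reg \<and> Hm J = 0 \<longrightarrow> Hm (EJ (q, J)) = 0))
  \<and> \<comment> \<open>U^2_{2l-1} = U^1_{2l} = 0\<close>
    (is_ham_vf i (hk (if i = 2 then 2*l - 1 else 2*l)) Eq EJ \<longrightarrow>
       (\<forall>q J. (q, J) \<in> M0reg \<and> Hm J = 0 \<longrightarrow> Eq (q, J) = 0 \<and> EJ (q, J) = 0))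
  \<and> \<comment> \<open>tilde U^2_{2l} = tilde U^1_{2l+1} = 0\<close>
    (is_ham_vf i (htk (if i = 2 then 2*l else 2*l + 1)) Eq EJ \<longrightarrow>
       (\<forall>q J. (q, J) \<in> M0reg \<and> Hm J = 0 \<longrightarrow> Eq (q, J) = 0 \<and> EJ (q, J) = 0))
  \<and> \<comment> \<open>U^2_{2l} = U^1_{2l+1}\<close>
    (is_ham_vf i (hk (if i = 2 then 2*l else 2*l + 1)) Eq EJ \<longrightarrow>
       (\<forall>q J. (q, J) \<in> M0reg \<and> Hm J = 0 \<longrightarrow>
          (\<forall>j. Eq (q, J) $ j = Re (matpow (Hp J) (2*l) $ j $ j)) \<and>
          Hp (EJ (q, J)) = comm (Rq q (matpow (Hp J) (2*l))) (Hp J)))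
  \<and> \<comment> \<open>tilde U^2_{2l-1} = tilde U^1_{2l}\<close>
    (is_ham_vf i (htk (if i = 2 then 2*l - 1 else 2*l)) Eq EJ \<longrightarrow>
       (\<forall>q J. (q, J) \<in> M0reg \<and> Hm J = 0 \<longrightarrow>
          (\<forall>j. Eq (q, J) $ j = Re (- \<i> * matpow (Hp J) (2*l - 1) $ j $ j)) \<and>
          Hp (EJ (q, J)) = comm (csmul (- \<i>) (Rq q (matpow (Hp J) (2*l - 1)))) (Hp J)))"
proof (intro ballI allI)
  fix i :: nat and Eq :: "'n::{finite,linorder} point \<Rightarrow> real^'n::{finite,linorder}" and EJ :: "'n::{finite,linorder} point \<Rightarrow> 'n::{finite,linorder} cmat"
  assume i: "i \<in> {1, 2}"
  have K1: "2 * l - 1 \<ge> 1" using assms(2) by simp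
  have K2: "2 * l \<ge> 1" using assms(2) by simp
  have e1: "(if i = 2 then 2*l - 1 else 2*l) = (if i = 2 then 2*l - 1 else (2*l - 1) + 1)"
    using assms(2) by simp
  have od: "odd (2 * l - 1)" using assms(2) by simp
  have ev: "even (2 * l)" by simp
  have A3: "is_ham_vf i (hk (if i = 2 then k else k + 1)) Eq EJ \<longrightarrow>
       (\<forall>q J. (q, J) \<in> M0reg \<and> Hp J = 0 \<longrightarrow>
          Hp (EJ (q, J)) = 0 \<and>
          (\<forall>j. complex_of_real (Eq (q, J) $ j) = matpow (Hm J) k $ j $ j) \<and>
          Hm (EJ (q, J)) = comm (Rq q (matpow (Hm J) k)) (Hm J)) \<and>
       (\<forall>q J. (q, J) \<in> M0reg \<and> Hm J = 0 \<longrightarrow> Hm (EJ (q, J)) = 0)"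
  proof (intro impI conjI allI)
    assume H: "is_ham_vf i (hk (if i = 2 then k else k + 1)) Eq EJ"
    fix q :: "real^'n::{finite,linorder}" and J :: "'n::{finite,linorder} cmat" assume qJ: "(q, J) \<in> M0reg \<and> Hp J = 0"
    then have h: "cadj J = J" by (simp add: Hp_zero_iff)
    note F = sndE[OF H assms(1) i conjunct1[OF qJ]]
    show "Hp (EJ (q, J)) = 0" using F E_tanM[OF h, of q k] by simp
    show "Hm (EJ (q, J)) = comm (Rq q (matpow (Hm J) k)) (Hm J)" using F E_tanM[OF h, of q k] by simp
    show "complex_of_real (Eq (q, J) $ j) = matpow (Hm J) k $ j $ j" for j
      using F herm_diag[OF herm_pow[OF h]] Hm_herm[OF h] by simp
  next
    fix q :: "real^'n::{finite,linorder}" and J :: "'n::{finite,linorder} cmat"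
    assume H: "is_ham_vf i (hk (if i = 2 then k else k + 1)) Eq EJ"
      and qJ: "(q, J) \<in> M0reg \<and> Hm J = 0"
    then have h: "cadj J = - J" by (simp add: Hm_zero_iff)
    note F = sndE[OF H assms(1) i conjunct1[OF qJ]]
    show "Hm (EJ (q, J)) = 0" using F E_tanP[OF h, of q k] by simp
  qed
  have A4: "is_ham_vf i (htk (if i = 2 then k else k + 1)) Eq EJ \<longrightarrow>
       (\<forall>q J. (q, J) \<in> M0reg \<and> Hp J = 0 \<longrightarrow> Eq (q, J) = 0 \<and> EJ (q, J) = 0) \<and>
       (\<forall>q J. (q, J) \<in> M0reg \<and> Hm J = 0 \<longrightarrow> Hm (EJ (q, J)) = 0)"
  proof (intro impI conjI allI)
    assume H: "is_ham_vf i (htk (if i = 2 then k else k + 1)) Eq EJ"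
    fix q :: "real^'n::{finite,linorder}" and J :: "'n::{finite,linorder} cmat" assume qJ: "(q, J) \<in> M0reg \<and> Hp J = 0"
    then have h: "cadj J = J" by (simp add: Hp_zero_iff)
    note F = sndT[OF H assms(1) i conjunct1[OF qJ]]
    show "Eq (q, J) = 0" using F T_tanM[OF h, of k q] by simp
    show "EJ (q, J) = 0" using F T_tanM[OF h, of k q] by simp
  next
    fix q :: "real^'n::{finite,linorder}" and J :: "'n::{finite,linorder} cmat"
    assume H: "is_ham_vf i (htk (if i = 2 then k else k + 1)) Eq EJ"
      and qJ: "(q, J) \<in> M0reg \<and> Hm J = 0"
    then have h: "cadj J = - J" by (simp add: Hm_zero_iff)
    note F = sndT[OF H assms(1) i conjunct1[OF qJ]]
    show "Hm (EJ (q, J)) = 0" using F T_tanP[OF h, of q k] by simp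
  qed
  have A5: "is_ham_vf i (hk (if i = 2 then 2*l - 1 else 2*l)) Eq EJ \<longrightarrow>
       (\<forall>q J. (q, J) \<in> M0reg \<and> Hm J = 0 \<longrightarrow> Eq (q, J) = 0 \<and> EJ (q, J) = 0)"
  proof (intro impI allI)
    fix q :: "real^'n::{finite,linorder}" and J :: "'n::{finite,linorder} cmat"
    assume H: "is_ham_vf i (hk (if i = 2 then 2*l - 1 else 2*l)) Eq EJ"
      and qJ: "(q, J) \<in> M0reg \<and> Hm J = 0"
    then have h: "cadj J = - J" by (simp add: Hm_zero_iff)
    have H': "is_ham_vf i (hk (if i = 2 then 2*l - 1 else (2*l - 1) + 1)) Eq EJ" using H e1 by simp
    note F = sndE[OF H' K1 i conjunct1[OF qJ]]
    show "Eq (q, J) = 0 \<and> EJ (q, J) = 0" using F U5[OF h od, of q] by simp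
  qed
  have A6: "is_ham_vf i (htk (if i = 2 then 2*l else 2*l + 1)) Eq EJ \<longrightarrow>
       (\<forall>q J. (q, J) \<in> M0reg \<and> Hm J = 0 \<longrightarrow> Eq (q, J) = 0 \<and> EJ (q, J) = 0)"
  proof (intro impI allI)
    fix q :: "real^'n::{finite,linorder}" and J :: "'n::{finite,linorder} cmat"
    assume H: "is_ham_vf i (htk (if i = 2 then 2*l else 2*l + 1)) Eq EJ"
      and qJ: "(q, J) \<in> M0reg \<and> Hm J = 0"
    then have h: "cadj J = - J" by (simp add: Hm_zero_iff)
    note F = sndT[OF H K2 i conjunct1[OF qJ]]
    show "Eq (q, J) = 0 \<and> EJ (q, J) = 0" using F U6[OF h ev, of q] by simp
  qed
  have A7: "is_ham_vf i (hk (if i = 2 then 2*l else 2*l + 1)) Eq EJ \<longrightarrow>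
       (\<forall>q J. (q, J) \<in> M0reg \<and> Hm J = 0 \<longrightarrow>
          (\<forall>j. Eq (q, J) $ j = Re (matpow (Hp J) (2*l) $ j $ j)) \<and>
          Hp (EJ (q, J)) = comm (Rq q (matpow (Hp J) (2*l))) (Hp J))"
  proof (intro impI allI)
    fix q :: "real^'n::{finite,linorder}" and J :: "'n::{finite,linorder} cmat"
    assume H: "is_ham_vf i (hk (if i = 2 then 2*l else 2*l + 1)) Eq EJ"
      and qJ: "(q, J) \<in> M0reg \<and> Hm J = 0"
    then have h: "cadj J = - J" by (simp add: Hm_zero_iff)
    note F = sndE[OF H K2 i conjunct1[OF qJ]]
    show "(\<forall>j. Eq (q, J) $ j = Re (matpow (Hp J) (2*l) $ j $ j)) \<and>
          Hp (EJ (q, J)) = comm (Rq q (matpow (Hp J) (2*l))) (Hp J)"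
      using F U7[OF h ev, of q] Hp_anti[OF h] by simp
  qed
  have A8: "is_ham_vf i (htk (if i = 2 then 2*l - 1 else 2*l)) Eq EJ \<longrightarrow>
       (\<forall>q J. (q, J) \<in> M0reg \<and> Hm J = 0 \<longrightarrow>
          (\<forall>j. Eq (q, J) $ j = Re (- \<i> * matpow (Hp J) (2*l - 1) $ j $ j)) \<and>
          Hp (EJ (q, J)) = comm (csmul (- \<i>) (Rq q (matpow (Hp J) (2*l - 1)))) (Hp J))"
  proof (intro impI allI)
    fix q :: "real^'n::{finite,linorder}" and J :: "'n::{finite,linorder} cmat"
    assume H: "is_ham_vf i (htk (if i = 2 then 2*l - 1 else 2*l)) Eq EJ"
      and qJ: "(q, J) \<in> M0reg \<and> Hm J = 0"
    then have h: "cadj J = - J" by (simp add: Hm_zero_iff)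
    have H': "is_ham_vf i (htk (if i = 2 then 2*l - 1 else (2*l - 1) + 1)) Eq EJ" using H e1 by simp
    note F = sndT[OF H' K1 i conjunct1[OF qJ]]
    show "(\<forall>j. Eq (q, J) $ j = Re (- \<i> * matpow (Hp J) (2*l - 1) $ j $ j)) \<and>
          Hp (EJ (q, J)) = comm (csmul (- \<i>) (Rq q (matpow (Hp J) (2*l - 1)))) (Hp J)"
      using F U8[OF h od, of q] Hp_anti[OF h] by (simp add: csmul_def)
  qed
  show "
    \<comment> \<open>E^2_k = E^1_{k+1}: explicit formula\<close>
    (is_ham_vf i (hk (if i = 2 then k else k + 1)) Eq EJ \<longleftrightarrow>
       (\<forall>q J. (q, J) \<in> M0reg \<longrightarrow>
          (\<forall>j. Eq (q, J) $ j = Re (matpow J k $ j $ j)) \<and>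
          EJ (q, J) = (1/2::real) *\<^sub>R comm (Rq q (matpow J k + cadj (matpow J k))
                                         + (cadj (matpow J k) - matpow J k)) J))
  \<and> \<comment> \<open>tilde E^2_k = tilde E^1_{k+1}: explicit formula\<close>
    (is_ham_vf i (htk (if i = 2 then k else k + 1)) Eq EJ \<longleftrightarrow>
       (\<forall>q J. (q, J) \<in> M0reg \<longrightarrow>
          (\<forall>j. Eq (q, J) $ j = Re (- \<i> * matpow J k $ j $ j)) \<and>
          EJ (q, J) = (1/2::real) *\<^sub>R comm (csmul \<i> (Rq q (cadj (matpow J k) - matpow J k))
                                         + csmul \<i> (matpow J k + cadj (matpow J k))) J))
  \<and> \<comment> \<open>E: tangency to M_{0,-} and M_{0,+}, and the restriction V to M_{0,-}\<close>
    (is_ham_vf i (hk (if i = 2 then k else k + 1)) Eq EJ \<longrightarrow>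
       (\<forall>q J. (q, J) \<in> M0reg \<and> Hp J = 0 \<longrightarrow>
          Hp (EJ (q, J)) = 0 \<and>
          (\<forall>j. complex_of_real (Eq (q, J) $ j) = matpow (Hm J) k $ j $ j) \<and>
          Hm (EJ (q, J)) = comm (Rq q (matpow (Hm J) k)) (Hm J)) \<and>
       (\<forall>q J. (q, J) \<in> M0reg \<and> Hm J = 0 \<longrightarrow> Hm (EJ (q, J)) = 0))
  \<and> \<comment> \<open>tilde E: tangency, and the restriction to M_{0,-} vanishes\<close>
    (is_ham_vf i (htk (if i = 2 then k else k + 1)) Eq EJ \<longrightarrow>
       (\<forall>q J. (q, J) \<in> M0reg \<and> Hp J = 0 \<longrightarrow> Eq (q, J) = 0 \<and> EJ (q, J) = 0) \<and>
       (\<forall>q J. (q, J) \<in> M0reg \<and> Hm J = 0 \<longrightarrow> Hm (EJ (q, J)) = 0))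
  \<and> \<comment> \<open>U^2_{2l-1} = U^1_{2l} = 0\<close>
    (is_ham_vf i (hk (if i = 2 then 2*l - 1 else 2*l)) Eq EJ \<longrightarrow>
       (\<forall>q J. (q, J) \<in> M0reg \<and> Hm J = 0 \<longrightarrow> Eq (q, J) = 0 \<and> EJ (q, J) = 0))
  \<and> \<comment> \<open>tilde U^2_{2l} = tilde U^1_{2l+1} = 0\<close>
    (is_ham_vf i (htk (if i = 2 then 2*l else 2*l + 1)) Eq EJ \<longrightarrow>
       (\<forall>q J. (q, J) \<in> M0reg \<and> Hm J = 0 \<longrightarrow> Eq (q, J) = 0 \<and> EJ (q, J) = 0))
  \<and> \<comment> \<open>U^2_{2l} = U^1_{2l+1}\<close>
    (is_ham_vf i (hk (if i = 2 then 2*l else 2*l + 1)) Eq EJ \<longrightarrow>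
       (\<forall>q J. (q, J) \<in> M0reg \<and> Hm J = 0 \<longrightarrow>
          (\<forall>j. Eq (q, J) $ j = Re (matpow (Hp J) (2*l) $ j $ j)) \<and>
          Hp (EJ (q, J)) = comm (Rq q (matpow (Hp J) (2*l))) (Hp J)))
  \<and> \<comment> \<open>tilde U^2_{2l-1} = tilde U^1_{2l}\<close>
    (is_ham_vf i (htk (if i = 2 then 2*l - 1 else 2*l)) Eq EJ \<longrightarrow>
       (\<forall>q J. (q, J) \<in> M0reg \<and> Hm J = 0 \<longrightarrow>
          (\<forall>j. Eq (q, J) $ j = Re (- \<i> * matpow (Hp J) (2*l - 1) $ j $ j)) \<and>
          Hp (EJ (q, J)) = comm (csmul (- \<i>) (Rq q (matpow (Hp J) (2*l - 1)))) (Hp J)))"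
    by (intro conjI, fact item_E[OF assms(1) i, of Eq EJ], fact item_T[OF assms(1) i, of Eq EJ], fact A3, fact A4, fact A5, fact A6, fact A7, fact A8)
qed


end
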